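(* For $n>0$, $a(n)=n$ if and only if the Fibonacci representation $(n)_F$ belongs to the regular language $1\,(00100^*1)^*\,\{\epsilon,\,01,\,010,\,0100\}$.
   Context: Let $(F_n)_{n\ge 0}$ be the Fibonacci numbers: $F_0=0$, $F_1=1$, $F_n=F_{n-1}+F_{n-2}$ for $n\ge 2$. Define $(a(n))_{n\ge 0}$ (OEIS A105774) by $a(0)=0$, $a(1)=1$, and for $n\ge 2$, $a(n)=F_{j+1}-a(n-F_j)$, where $j\ge 2$ is the unique index with $F_j<n\le F_{j+1}$. The Fibonacci (Zeckendorf) representation $(n)_F$ of $n\ge1$ is the unique binary string $e_1\cdots e_t$ with $e_1=1$, no two consecutive $1$'s, and $n=\sum_{i=1}^t e_iF_{t-i+2}$. In the regular expression, juxtaposition is concatenation, $\epsilon$ is the empty string, $w^*$ denotes zero or more repetitions of $w$, and the star applies to the immediately preceding symbol or parenthesized group (so $00100^*1$ denotes the strings $0010\,0^k\,1$, $k\ge 0$); a set of strings in braces denotes a choice of one of them. *)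

theory Defs
  imports "HOL-Number_Theory.Fib"
begin

(* F_n is the library's fib: fib 0 = 0, fib 1 = 1, fib (n+2) = fib (n+1) + fib n *)

lemma fib_ge_self: "n \<le> fib (n + 2)"
proof (induction n)
  case 0 then show ?case by simp
next
  case (Suc n)
  have "fib (Suc n + 2) = fib (n + 2) + fib (n + 1)"
    using fib_plus_2[of "n+1"] by simp
  moreover have "fib (n + 1) \<ge> 1" using fib_neq_0_nat[of "n+1"] by simp
  ultimately show ?case using Suc by simp
qed

lemma fib_index_exists_unique:
  assumes "2 \<le> n"
  shows "\<exists>!j. 2 \<le> j \<and> fib j < n \<and> n \<le> fib (j + 1)"
proof -
  define j where "j = (LEAST j. n \<le> fib (Suc j))"
  have ex: "n \<le> fib (Suc (Suc n))" using fib_ge_self[of n] by simp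
  have jP: "n \<le> fib (Suc j)" unfolding j_def by (rule LeastI[where P="\<lambda>j. n \<le> fib (Suc j)", OF ex])
  have j2: "2 \<le> j"
  proof (rule ccontr)
    assume "\<not> 2 \<le> j"
    then have "j = 0 \<or> j = 1" by auto
    then show False using jP assms by (auto simp: numeral_2_eq_2)
  qed
  have "\<not> n \<le> fib (Suc (j - 1))"
    unfolding j_def by (rule not_less_Least) (use j2 j_def in auto)
  then have "fib j < n" using j2 by (simp add: Suc_diff_1)
  then have P: "2 \<le> j \<and> fib j < n \<and> n \<le> fib (j + 1)" using j2 jP by simp
  show ?thesis
  proof (rule ex1I[of _ j])
    show "2 \<le> j \<and> fib j < n \<and> n \<le> fib (j + 1)" by (rule P)
  next
    fix k assume k: "2 \<le> k \<and> fib k < n \<and> n \<le> fib (k + 1)"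
    show "k = j"
    proof (rule ccontr)
      assume "k \<noteq> j"
      then have "k + 1 \<le> j \<or> j + 1 \<le> k" by auto
      then show False
        using fib_mono[of "k+1" j] fib_mono[of "j+1" k] P k by auto
    qed
  qed
qed

definition fib_index :: "nat \<Rightarrow> nat" where
  "fib_index n = (THE j. 2 \<le> j \<and> fib j < n \<and> n \<le> fib (j + 1))"

lemma fib_index_prop:
  assumes "2 \<le> n"
  shows "2 \<le> fib_index n \<and> fib (fib_index n) < n \<and> n \<le> fib (fib_index n + 1)"
  unfolding fib_index_def using theI'[OF fib_index_exists_unique[OF assms]] .

(* OEIS A105774; values taken in int so that the subtraction is genuine *)
function A105774 :: "nat \<Rightarrow> int" where
  "A105774 n = (if n = 0 then 0 else if n = 1 then 1
     else int (fib (fib_index n + 1)) - A105774 (n - fib (fib_index n)))"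
  by auto
termination
proof (relation "measure id")
  show "wf (measure id)" by simp
next
  fix n :: nat assume "\<not> n = 0" "\<not> n = 1"
  then have n2: "2 \<le> n" by auto
  then have "2 \<le> fib_index n" using fib_index_prop by blast
  then have "0 < fib (fib_index n)" by (intro fib_neq_0_nat) simp
  then show "(n - fib (fib_index n), n) \<in> measure id" using n2 by simp
qed

declare A105774.simps [simp del]

definition fib_value :: "nat list \<Rightarrow> nat" where
  "fib_value w = (\<Sum>i<length w. w ! i * fib (length w - i + 1))"

definition is_zeck_rep :: "nat list \<Rightarrow> bool" where
  "is_zeck_rep w \<longleftrightarrow> w \<noteq> [] \<and> hd w = 1 \<and> set w \<subseteq> {0, 1} \<and>
     (\<forall>i. i + 1 < length w \<longrightarrow> \<not> (w ! i = 1 \<and> w ! (i + 1) = 1))"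

definition zeck :: "nat \<Rightarrow> nat list" where
  "zeck n = (THE w. is_zeck_rep w \<and> fib_value w = n)"

definition lang21 :: "nat list set" where
  "lang21 = {[1] @ concat ws @ s | ws s.
      (\<forall>w \<in> set ws. \<exists>k. w = [0,0,1,0] @ replicate k 0 @ [1]) \<and>
      s \<in> {[], [0,1], [0,1,0], [0,1,0,0]}}"

end

theory Submission
  imports Defs
begin

lemma fibSS: "fib (Suc (Suc n)) = fib (Suc n) + fib n" by simp

lemma fib_less_imp: "fib a < fib b \<Longrightarrow> a < b"
  using fib_mono[of b a] by (cases "b \<le> a") auto

lemma fib_pos: "0 < k \<Longrightarrow> 1 \<le> fib k"
  using fib_neq_0_nat[of k] by simp

lemma fib_index_eq:
  assumes "2 \<le> j" "fib j < n" "n \<le> fib (j + 1)"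
  shows "fib_index n = j"
proof -
  have "1 \<le> fib j" using assms(1) fib_pos by simp
  then have n2: "2 \<le> n" using assms by simp
  show ?thesis unfolding fib_index_def
    by (rule the1_equality[OF fib_index_exists_unique[OF n2]]) (use assms in auto)
qed

lemma A_rec: "2 \<le> m \<Longrightarrow> A105774 m = int (fib (fib_index m + 1)) - A105774 (m - fib (fib_index m))"
  by (subst A105774.simps) auto

lemma A_1: "A105774 1 = 1" by (subst A105774.simps) auto

lemma idx_facts:
  assumes "2 \<le> m"
  defines "i \<equiv> fib_index m"
  shows "2 \<le> i" "fib i < m" "m \<le> fib (i+1)" "1 \<le> m - fib i" "m - fib i \<le> fib (i - 1)"
    "fib (i+1) = fib i + fib (i - 1)"
proof -
  show i2: "2 \<le> i" "fib i < m" "m \<le> fib (i+1)" using fib_index_prop[OF assms(1)] i_def by auto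
  show fe: "fib (i+1) = fib i + fib (i - 1)" using i2(1)
    by (cases i) (auto simp: fibSS)
  show "1 \<le> m - fib i" using i2 by simp
  show "m - fib i \<le> fib (i - 1)" using i2 fe by simp
qed

lemma A_bound:
  "1 \<le> m \<Longrightarrow> 1 \<le> A105774 m \<and> (\<forall>k. m \<le> fib k \<longrightarrow> A105774 m \<le> int (fib k))"
proof (induction m rule: less_induct)
  case (less m)
  show ?case
  proof (cases "m = 1")
    case True then show ?thesis using A_1 by auto
  next
    case False
    then have m2: "2 \<le> m" using less.prems by simp
    define i where "i = fib_index m"
    note F = idx_facts[OF m2, folded i_def]
    define m' where "m' = m - fib i"
    have lt: "m' < m" using F m'_def fib_pos[of i] by simp
    have IH: "1 \<le> A105774 m'" "A105774 m' \<le> int (fib (i - 1))"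
      using less.IH[OF lt] F m'_def by auto
    have rec: "A105774 m = int (fib (i+1)) - A105774 m'" using A_rec[OF m2] i_def m'_def by simp
    have "1 \<le> fib i" using fib_pos F by simp
    then have c1: "1 \<le> A105774 m" using rec IH F by simp
    have "A105774 m \<le> int (fib k)" if "m \<le> fib k" for k
    proof -
      have "i < k" using fib_less_imp[of i k] F that by simp
      then have "fib (i+1) \<le> fib k" using fib_mono by simp
      then show ?thesis using rec IH by simp
    qed
    then show ?thesis using c1 by auto
  qed
qed

lemma fib_eq_2: "fib k = 2 \<Longrightarrow> k = 3"
proof -
  assume h: "fib k = 2"
  have "\<not> k \<le> 2" using fib_mono[of k 2] h by auto
  moreover have "\<not> 4 \<le> k" using fib_mono[of 4 k] h by (auto simp: numeral_eq_Suc)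
  ultimately show "k = 3" by simp
qed

lemma sum_char:
  assumes "1 \<le> m" "m \<le> fib k"
  shows "A105774 m + int m = int (fib k) \<longleftrightarrow> (m = 1 \<and> k = 3) \<or>
     (2 \<le> m \<and> fib_index m + 2 = k \<and> A105774 (m - fib (fib_index m)) = int (m - fib (fib_index m)))"
proof (cases "m = 1")
  case True
  then show ?thesis using A_1 fib_eq_2[of k] by (auto simp: numeral_eq_Suc)
next
  case False
  then have m2: "2 \<le> m" using assms by simp
  define i where "i = fib_index m"
  note F = idx_facts[OF m2, folded i_def]
  define m' where "m' = m - fib i"
  have IH: "1 \<le> A105774 m'" "A105774 m' \<le> int (fib (i - 1))"
    using A_bound[of m'] F m'_def by auto
  have rec: "A105774 m = int (fib (i+1)) - A105774 m'" using A_rec[OF m2] i_def m'_def by simp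
  have m'b: "m' \<le> fib (i - 1)" using F m'_def by simp
  have f2: "fib (i+2) = fib (i+1) + fib i" using fib_plus_2[of i] by simp
  have mono1: "fib (i - 1) \<le> fib i" using fib_mono[of "i-1" i] by simp
  have ik: "i < k" using fib_less_imp[of i k] F assms by simp
  have eq: "A105774 m + int m = int (fib (i+2)) + int m' - A105774 m'"
    using rec m'_def F f2 by simp
  have "A105774 m + int m = int (fib k) \<longleftrightarrow> i + 2 = k \<and> A105774 m' = int m'"
  proof (cases "k = i + 1")
    case True
    then show ?thesis using eq IH F f2 mono1 m'_def by auto
  next
    case k1: False
    show ?thesis
    proof (cases "k = i + 2")
      case True then show ?thesis using eq by auto
    next
      case False
      then have "i + 3 \<le> k" using ik k1 by simp
      then have "fib (i+3) \<le> fib k" using fib_mono by simp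
      moreover have "fib (i+3) = fib (i+2) + fib (i+1)" by (simp add: eval_nat_numeral)
      moreover have "fib (i - 1) \<le> fib (i+1)" using fib_mono[of "i-1" "i+1"] by simp
      ultimately show ?thesis using eq IH False m'b by auto
    qed
  qed
  then show ?thesis using False m2 i_def m'_def by auto
qed

lemma fib_not_fixed:
  assumes "3 \<le> k" shows "A105774 (fib k) < int (fib k)"
proof -
  obtain p where p: "k = p + 3" using assms by (metis add.commute le_iff_add)
  have e: "fib (p+3) = fib (p+2) + fib (p+1)" by (simp add: eval_nat_numeral)
  have e2: "fib (p+2) = fib (p+1) + fib p" using fib_plus_2[of "p"] by simp
  have pos: "1 \<le> fib (p+1)" using fib_pos by simp
  have idx: "fib_index (fib k) = p + 2"
    using fib_index_eq[of "p+2" "fib k"] p e pos by simp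
  have "2 \<le> fib k" using p e e2 pos by simp
  then have "A105774 (fib k) = int (fib k) - A105774 (fib (p+1))"
    using A_rec[of "fib k"] idx p e by simp
  moreover have "1 \<le> A105774 (fib (p+1))" using A_bound pos by blast
  ultimately show ?thesis by simp
qed

declare fib.simps(3) [simp del]

lemma fv_Nil [simp]: "fib_value [] = 0" by (simp add: fib_value_def)

lemma fv_Cons [simp]: "fib_value (x # w) = x * fib (length w + 2) + fib_value w"
  unfolding fib_value_def length_Cons sum.lessThan_Suc_shift by simp

lemma fv_rep0 [simp]: "fib_value (replicate k 0 @ v) = fib_value v"
  by (induction k) auto

fun ok :: "nat list \<Rightarrow> bool" where
  "ok [] = True"
| "ok [x] = (x \<le> 1)"
| "ok (x # y # w) = (x \<le> 1 \<and> \<not> (x = 1 \<and> y = 1) \<and> ok (y # w))"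

lemma ok_iff: "ok w \<longleftrightarrow> set w \<subseteq> {0, 1} \<and> (\<forall>i. i + 1 < length w \<longrightarrow> \<not> (w ! i = 1 \<and> w ! (i + 1) = 1))"
proof (induction w rule: ok.induct)
  case 1 then show ?case by simp
next
  case (2 x) then show ?case by auto
next
  case (3 x y w)
  have "(\<forall>i. i + 1 < length (x # y # w) \<longrightarrow> \<not> ((x # y # w) ! i = 1 \<and> (x # y # w) ! (i + 1) = 1))
    \<longleftrightarrow> \<not> (x = 1 \<and> y = 1) \<and> (\<forall>i. i + 1 < length (y # w) \<longrightarrow> \<not> ((y # w) ! i = 1 \<and> (y # w) ! (i + 1) = 1))"
    (is "?L \<longleftrightarrow> ?R")
  proof
    assume L: ?L
    show ?R
    proof (intro conjI allI impI)
      show "\<not> (x = 1 \<and> y = 1)" using L[rule_format, of 0] by simp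
    next
      fix i assume "i + 1 < length (y # w)"
      then show "\<not> ((y # w) ! i = 1 \<and> (y # w) ! (i + 1) = 1)" using L[rule_format, of "Suc i"] by simp
    qed
  next
    assume R: ?R
    show ?L
    proof (intro allI impI)
      fix i assume i: "i + 1 < length (x # y # w)"
      show "\<not> ((x # y # w) ! i = 1 \<and> (x # y # w) ! (i + 1) = 1)"
      proof (cases i)
        case 0 then show ?thesis using R by simp
      next
        case (Suc i') then show ?thesis using R i by auto
      qed
    qed
  qed
  then show ?case using 3 by auto
qed

definition zr :: "nat list \<Rightarrow> bool" where
  "zr w \<longleftrightarrow> w \<noteq> [] \<and> hd w = 1 \<and> ok w"

lemma zr_iff: "is_zeck_rep w \<longleftrightarrow> zr w"
  unfolding is_zeck_rep_def zr_def ok_iff by auto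

lemma ok_tl: "ok (x # w) \<Longrightarrow> ok w"
  by (cases w) auto

lemma ok_hd: "ok (x # w) \<Longrightarrow> x \<le> 1"
  by (cases w) auto

lemma ok_0: "ok w \<Longrightarrow> ok (0 # w)"
  by (cases w) auto

lemma ok_rep0: "ok w \<Longrightarrow> ok (replicate k 0 @ w)"
  by (induction k) (auto intro: ok_0)

lemma ok_10: "ok w \<Longrightarrow> ok (1 # 0 # w)"
  by (auto intro: ok_0)

lemma fv_upper_aux: "ok w \<Longrightarrow> fib_value w < fib (length w + 2) \<and>
   (w \<noteq> [] \<longrightarrow> hd w = 0 \<longrightarrow> fib_value w < fib (length w + 1))"
proof (induction w rule: ok.induct)
  case 1 then show ?case by (simp add: fibSS)
next
  case (2 x)
  have "fib 3 = 2" by (simp add: eval_nat_numeral fibSS)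
  then show ?case using 2 by (auto simp: fibSS)
next
  case (3 x y w)
  have IH: "fib_value (y # w) < fib (length w + 3)" using 3 by (simp add: eval_nat_numeral)
  have m1: "fib (length w + 3) \<le> fib (length w + 4)" using fib_mono by simp
  have e4: "fib (length w + 4) = fib (length w + 3) + fib (length w + 2)"
    by (simp add: eval_nat_numeral fibSS)
  show ?case
  proof (cases "x = 0")
    case True then show ?thesis using IH m1 by (simp add: eval_nat_numeral)
  next
    case False
    then have xy: "x = 1" "y = 0" using 3 ok_hd[of y w] by auto
    then have IH2: "fib_value w < fib (length w + 2)" using 3 by (simp add: eval_nat_numeral)
    show ?thesis using xy IH2 e4 by (simp add: eval_nat_numeral)
  qed
qed

lemma fv_upper: "ok w \<Longrightarrow> fib_value w < fib (length w + 2)"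
  using fv_upper_aux by blast

lemma fv_lower: "zr w \<Longrightarrow> fib (length w + 1) \<le> fib_value w"
  unfolding zr_def by (cases w) auto

lemma uniq_len: "ok w \<Longrightarrow> ok v \<Longrightarrow> length w = length v \<Longrightarrow> fib_value w = fib_value v \<Longrightarrow> w = v"
proof (induction w arbitrary: v)
  case Nil then show ?case by simp
next
  case (Cons x w)
  obtain y v' where v: "v = y # v'" using Cons.prems by (cases v) auto
  have x1: "x \<le> 1" and y1: "y \<le> 1" using Cons.prems v ok_hd by auto
  have okw: "ok w" and okv: "ok v'" using Cons.prems v ok_tl by auto
  have len: "length w = length v'" using Cons.prems v by simp
  have bw: "fib_value w < fib (length w + 2)" using fv_upper[OF okw] .
  have bv: "fib_value v' < fib (length w + 2)" using fv_upper[OF okv] len by simp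
  have xy: "x = y"
  proof (rule ccontr)
    assume "x \<noteq> y"
    then have "(x = 1 \<and> y = 0) \<or> (x = 0 \<and> y = 1)" using x1 y1 by auto
    then show False using Cons.prems(4) v bw bv len by auto
  qed
  then have "fib_value w = fib_value v'" using Cons.prems(4) v len by simp
  then show ?case using Cons.IH[OF okw okv len] xy v by simp
qed

lemma uniq: "zr w \<Longrightarrow> zr v \<Longrightarrow> fib_value w = fib_value v \<Longrightarrow> w = v"
proof -
  assume w: "zr w" and v: "zr v" and e: "fib_value w = fib_value v"
  have "length w = length v"
  proof (rule ccontr)
    assume "length w \<noteq> length v"
    then have "length w + 2 \<le> length v + 1 \<or> length v + 2 \<le> length w + 1" by auto
    then show False
      using fv_lower[OF w] fv_lower[OF v] fv_upper[of w] fv_upper[of v] w v e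
        fib_mono[of "length w + 2" "length v + 1"] fib_mono[of "length v + 2" "length w + 1"]
      unfolding zr_def by force
  qed
  then show ?thesis using uniq_len w v e unfolding zr_def by blast
qed

lemma exists_zr: "0 < n \<Longrightarrow> \<exists>w. zr w \<and> fib_value w = n"
proof (induction n rule: less_induct)
  case (less n)
  define t where "t = (LEAST t. n < fib (t + 2))"
  have ex: "n < fib (n + 3)"
  proof -
    have "n \<le> fib (n + 2)" by (rule fib_ge_self)
    moreover have "fib (n+3) = fib (n+2) + fib (n+1)" by (simp add: eval_nat_numeral fibSS)
    moreover have "1 \<le> fib (n+1)" using fib_pos by simp
    ultimately show ?thesis by simp
  qed
  have tP: "n < fib (t + 2)" unfolding t_def by (rule LeastI[of _ "n+1"]) (use ex in \<open>simp add: eval_nat_numeral\<close>)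
  have t1: "1 \<le> t"
  proof (rule ccontr)
    assume "\<not> 1 \<le> t" then have "t = 0" by simp
    then show False using tP less.prems by (simp add: fibSS)
  qed
  have "\<not> n < fib (t - 1 + 2)" unfolding t_def
    by (rule not_less_Least) (use t1 t_def in auto)
  then have lo: "fib (t + 1) \<le> n" using t1 by simp
  have ft: "fib (t + 2) = fib (t+1) + fib t" using fib_plus_2[of t] by simp
  define r where "r = n - fib (t+1)"
  have rlt: "r < fib t" using tP lo ft r_def by simp
  show ?case
  proof (cases "r = 0")
    case True
    let ?w = "1 # replicate (t - 1) 0"
    have "zr ?w" unfolding zr_def using ok_rep0[of "[]" "t-1"] by (cases "t - 1") auto
    moreover have "fib_value ?w = n" using True r_def lo t1
      using fv_rep0[of "t-1" "[]"] by simp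
    ultimately show ?thesis by blast
  next
    case False
    have "r < n" using r_def lo fib_pos[of "t+1"] by simp
    then obtain v where v: "zr v" "fib_value v = r" using less.IH False by blast
    have "fib (length v + 1) < fib t" using fv_lower[OF v(1)] v(2) rlt by simp
    then have sl: "length v + 1 < t" using fib_less_imp by blast
    let ?w = "1 # 0 # replicate (t - 2 - length v) 0 @ v"
    have okv: "ok v" using v unfolding zr_def by simp
    have "zr ?w" unfolding zr_def using ok_10[OF ok_rep0[OF okv]] by simp
    moreover have "fib_value ?w = n"
    proof -
      have L: "length (0 # replicate (t - 2 - length v) 0 @ v) = t - 1" using sl by simp
      have "fib_value ?w = 1 * fib (length (0 # replicate (t - 2 - length v) 0 @ v) + 2)
          + fib_value (0 # replicate (t - 2 - length v) 0 @ v)" by (rule fv_Cons)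
      also have "\<dots> = fib (t - 1 + 2) + r" unfolding L using v(2) by simp
      also have "t - 1 + 2 = t + 1" using t1 by simp
      finally have "fib_value ?w = fib (t + 1) + r" .
      then show ?thesis using r_def lo by simp
    qed
    ultimately show ?thesis by blast
  qed
qed

lemma zeck_eq: "zr w \<Longrightarrow> zeck (fib_value w) = w"
  unfolding zeck_def zr_iff by (rule the_equality) (auto intro: uniq)

lemma zeck_zr: "0 < n \<Longrightarrow> zr (zeck n) \<and> fib_value (zeck n) = n"
  using exists_zr[of n] zeck_eq by metis

lemma fib_small: "fib 3 = 2" "fib 4 = 3" "fib 5 = 5" "fib 6 = 8" "fib 7 = 13"
  by (simp_all add: eval_nat_numeral fibSS)

lemma A_small: "A105774 2 = 1" "A105774 3 = 2" "A105774 4 = 4" "A105774 7 = 7" "A105774 11 = 11"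
proof -
  have i2: "fib_index 2 = 2" by (rule fib_index_eq) (simp_all add: fib_small)
  have i3: "fib_index 3 = 3" by (rule fib_index_eq) (simp_all add: fib_small)
  have i4: "fib_index 4 = 4" by (rule fib_index_eq) (simp_all add: fib_small)
  have i7: "fib_index 7 = 5" by (rule fib_index_eq) (simp_all add: fib_small)
  have i11: "fib_index 11 = 6" by (rule fib_index_eq) (simp_all add: fib_small)
  show a2: "A105774 2 = 1" using A_rec[of 2] i2 A_1 by (simp add: fib_small)
  show a3: "A105774 3 = 2" using A_rec[of 3] i3 A_1 by (simp add: fib_small)
  show "A105774 4 = 4" using A_rec[of 4] i4 A_1 by (simp add: fib_small)
  show "A105774 7 = 7" using A_rec[of 7] i7 a2 by (simp add: fib_small)
  show "A105774 11 = 11" using A_rec[of 11] i11 a3 by (simp add: fib_small)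
qed

definition B21 :: "nat list set" where
  "B21 = {[1], [1,0,1], [1,0,1,0], [1,0,1,0,0]}"

lemma lang_rec: "w \<in> lang21 \<longleftrightarrow> w \<in> B21 \<or>
   (\<exists>k v. 1 \<le> k \<and> v \<in> lang21 \<and> w = [1,0,0,1] @ replicate k 0 @ v)"
proof
  assume "w \<in> lang21"
  then obtain ws s where w: "w = [1] @ concat ws @ s"
    and ws: "\<forall>x \<in> set ws. \<exists>k. x = [0,0,1,0] @ replicate k 0 @ [1]"
    and s: "s \<in> {[], [0,1], [0,1,0], [0,1,0,0]}"
    unfolding lang21_def by blast
  show "w \<in> B21 \<or> (\<exists>k v. 1 \<le> k \<and> v \<in> lang21 \<and> w = [1,0,0,1] @ replicate k 0 @ v)"
  proof (cases ws)
    case Nil then show ?thesis using w s unfolding B21_def by auto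
  next
    case (Cons x ws')
    obtain k where x: "x = [0,0,1,0] @ replicate k 0 @ [1]" using ws Cons by auto
    have v: "[1] @ concat ws' @ s \<in> lang21" unfolding lang21_def using ws Cons s by auto
    have "w = [1,0,0,1] @ replicate (Suc k) 0 @ ([1] @ concat ws' @ s)"
      using w Cons x by (simp add: replicate_app_Cons_same)
    moreover have "1 \<le> Suc k" by simp
    ultimately show ?thesis using v by blast
  qed
next
  assume "w \<in> B21 \<or> (\<exists>k v. 1 \<le> k \<and> v \<in> lang21 \<and> w = [1,0,0,1] @ replicate k 0 @ v)"
  then show "w \<in> lang21"
  proof
    assume wB: "w \<in> B21"
    show ?thesis unfolding lang21_def
      by (intro CollectI exI[of _ "[]"] exI[of _ "tl w"]) (use wB in \<open>auto simp: B21_def\<close>)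
  next
    assume "\<exists>k v. 1 \<le> k \<and> v \<in> lang21 \<and> w = [1,0,0,1] @ replicate k 0 @ v"
    then obtain k v where k: "1 \<le> k" and v: "v \<in> lang21" and w: "w = [1,0,0,1] @ replicate k 0 @ v"
      by blast
    obtain ws s where v': "v = [1] @ concat ws @ s"
      and ws: "\<forall>x \<in> set ws. \<exists>k. x = [0,0,1,0] @ replicate k 0 @ [1]"
      and s: "s \<in> {[], [0,1], [0,1,0], [0,1,0,0]}"
      using v unfolding lang21_def by blast
    obtain k' where k': "k = Suc k'" using k by (cases k) auto
    have "w = [1] @ concat (([0,0,1,0] @ replicate k' 0 @ [1]) # ws) @ s"
      using w v' k' by (simp add: replicate_app_Cons_same)
    moreover have "\<forall>x \<in> set (([0,0,1,0] @ replicate k' 0 @ [1]) # ws). \<exists>k. x = [0,0,1,0] @ replicate k 0 @ [1]"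
      using ws by auto
    ultimately show ?thesis unfolding lang21_def using s by blast
  qed
qed

lemma fv_B: "fib_value [1] = 1" "fib_value [1,0,1] = 4" "fib_value [1,0,1,0] = 7"
  "fib_value [1,0,1,0,0] = 11"
  by (simp_all add: fibSS)

lemma ok_pat: "ok v \<Longrightarrow> 1 \<le> k \<Longrightarrow> ok ([1,0,0,1] @ replicate k 0 @ v)"
proof -
  assume v: "ok v" and k: "1 \<le> k"
  obtain k' where k': "k = Suc k'" using k by (cases k) auto
  have "ok (0 # 0 # 1 # 0 # replicate k' 0 @ v)"
    by (rule ok_0[OF ok_0[OF ok_10[OF ok_rep0[OF v]]]])
  then show ?thesis using k' by simp
qed

lemma fv_pat: "fib_value ([1,0,0,1] @ replicate k 0 @ v) =
   fib (length v + k + 5) + fib (length v + k + 2) + fib_value v"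
proof -
  have e1: "length v + k + 5 = Suc(Suc(Suc(Suc(Suc(k + length v)))))"
   and e2: "length v + k + 2 = Suc(Suc(k + length v))" by simp_all
  show ?thesis unfolding e1 e2 by simp
qed

lemma lang_zr: "w \<in> lang21 \<Longrightarrow> zr w"
proof (induction "length w" arbitrary: w rule: less_induct)
  case less
  from lang_rec[THEN iffD1, OF less.prems] show ?case
  proof
    assume "w \<in> B21" then show ?thesis unfolding B21_def zr_def by auto
  next
    assume "\<exists>k v. 1 \<le> k \<and> v \<in> lang21 \<and> w = [1,0,0,1] @ replicate k 0 @ v"
    then obtain k v where k: "1 \<le> k" and v: "v \<in> lang21" and w: "w = [1,0,0,1] @ replicate k 0 @ v"
      by blast
    have "length v < length w" using w by simp
    then have "zr v" using less.hyps v by blast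
    then show ?thesis unfolding zr_def using ok_pat[of v k] k w by simp
  qed
qed

theorem theorem21:
  fixes n :: nat
  assumes "0 < n"
  shows "A105774 n = int n \<longleftrightarrow> zeck n \<in> lang21"
  using assms
proof (induction n rule: less_induct)
  case (less n)
  have zn: "zr (zeck n)" "fib_value (zeck n) = n" using zeck_zr[OF less.prems] by auto
  show ?case
  proof (cases "n \<in> {1,4,7,11}")
    case True
    have zv: "zeck (fib_value w) = w" if "w \<in> B21" for w
    proof -
      have "zr w" using that unfolding B21_def zr_def by auto
      then show ?thesis by (rule zeck_eq)
    qed
    have "zeck n \<in> B21"
    proof -
      have "n = 1 \<or> n = 4 \<or> n = 7 \<or> n = 11" using True by simp
      then show ?thesis
      proof (elim disjE)
        assume "n = 1" then show ?thesis using zv[of "[1]"] fv_B(1) by (simp only: B21_def insert_iff simp_thms)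
      next
        assume "n = 4" then show ?thesis using zv[of "[1,0,1]"] fv_B(2) by (simp only: B21_def insert_iff simp_thms)
      next
        assume "n = 7" then show ?thesis using zv[of "[1,0,1,0]"] fv_B(3) by (simp only: B21_def insert_iff simp_thms)
      next
        assume "n = 11" then show ?thesis using zv[of "[1,0,1,0,0]"] fv_B(4) by (simp only: B21_def insert_iff simp_thms)
      qed
    qed
    then have "zeck n \<in> lang21" by (intro lang_rec[THEN iffD2] disjI1)
    moreover have "A105774 n = int n" using True A_small A_1 by auto
    ultimately show ?thesis by simp
  next
    case False
    then have n2: "2 \<le> n" using less.prems by auto
    define j where "j = fib_index n"
    note F = idx_facts[OF n2, folded j_def]
    define m where "m = n - fib j"
    have m1: "1 \<le> m" "m \<le> fib (j - 1)" using F m_def by auto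
    have "A105774 n = int (fib (j+1)) - A105774 m" using A_rec[OF n2] j_def m_def by simp
    then have s1: "A105774 n = int n \<longleftrightarrow> A105774 m + int m = int (fib (j - 1))"
      using F m_def by auto
    have s2: "A105774 n = int n \<longleftrightarrow> (2 \<le> m \<and> fib_index m + 2 = j - 1 \<and>
        A105774 (m - fib (fib_index m)) = int (m - fib (fib_index m)))"
    proof -
      have "\<not> (m = 1 \<and> j - 1 = 3)"
      proof
        assume h: "m = 1 \<and> j - 1 = 3"
        then have "j = 4" by linarith
        then have "n = 4" using h m_def F by (simp add: fib_small)
        then show False using False by simp
      qed
      then show ?thesis using s1 sum_char[OF m1] by blast
    qed
    show ?thesis
    proof
      assume "A105774 n = int n"
      then have m2: "2 \<le> m" and im: "fib_index m + 2 = j - 1"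
        and fx: "A105774 (m - fib (fib_index m)) = int (m - fib (fib_index m))" using s2 by auto
      define i where "i = fib_index m"
      note G = idx_facts[OF m2, folded i_def]
      define p where "p = m - fib i"
      have ji: "j = i + 3" using im i_def G by simp
      have fxp: "A105774 p = int p" using fx i_def p_def by simp
      have pn: "p < n" using p_def m_def F G fib_pos[of j] by simp
      have zp: "zeck p \<in> lang21" using less.IH[OF pn] fxp G p_def by simp
      have pne: "p \<noteq> fib (i - 1)"
      proof
        assume pe: "p = fib (i - 1)"
        show False
        proof (cases "3 \<le> i - 1")
          case True then show False using fib_not_fixed[of "i-1"] pe fxp by simp
        next
          case c: False
          then have "i = 2 \<or> i = 3" using G by auto
          then show False
          proof
            assume "i = 2"
            then have "n = 7" using pe p_def m_def ji F G by (simp add: fib_small)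
            then show False using False by simp
          next
            assume "i = 3"
            then have "n = 11" using pe p_def m_def ji F G by (simp add: fib_small)
            then show False using False by simp
          qed
        qed
      qed
      then have plt: "p < fib (i - 1)" using G p_def by simp
      have pz: "zr (zeck p)" "fib_value (zeck p) = p" using zeck_zr[of p] G p_def by auto
      define v where "v = zeck p"
      define t where "t = length v"
      have "fib (t + 1) < fib (i - 1)" using fv_lower[of v] pz plt v_def t_def by simp
      then have ti: "t + 1 < i - 1" using fib_less_imp by blast
      define k where "k = i - 2 - t"
      have k1: "1 \<le> k" using ti k_def by simp
      define w where "w = [1,0,0,1] @ replicate k 0 @ v"
      have zw: "zr w" unfolding zr_def w_def using ok_pat[OF _ k1, of v] pz v_def
        unfolding zr_def by simp
      have "fib_value w = fib (t + k + 5) + fib (t + k + 2) + p"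
        using fv_pat[of k v] pz v_def t_def w_def by simp
      also have "t + k + 5 = j" using ji k_def ti by simp
      also have "t + k + 2 = i" using k_def ti by simp
      moreover have "fib j + fib i \<le> n" using G m_def by simp
      ultimately have "fib_value w = n" using p_def m_def by simp
      then have "zeck n = w" using zeck_eq[OF zw] by simp
      moreover have "w \<in> lang21"
        by (rule lang_rec[THEN iffD2], rule disjI2, rule exI[of _ k], rule exI[of _ v]) (use k1 zp v_def w_def in simp)
      ultimately show "zeck n \<in> lang21" by simp
    next
      assume zl: "zeck n \<in> lang21"
      have nB: "zeck n \<notin> B21"
      proof
        assume "zeck n \<in> B21"
        then have "n \<in> {1,4,7,11}" using zn(2) unfolding B21_def using fv_B by auto
        then show False using False by simp
      qed
      then obtain k v where k: "1 \<le> k" and v: "v \<in> lang21" and w: "zeck n = [1,0,0,1] @ replicate k 0 @ v"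
        using lang_rec[THEN iffD1, OF zl] nB by blast
      have zv: "zr v" using lang_zr[OF v] .
      define t where "t = length v"
      define p where "p = fib_value v"
      have pl: "fib (t + 1) \<le> p" using fv_lower[OF zv] t_def p_def by simp
      have p1: "1 \<le> p" using pl fib_pos[of "t+1"] by simp
      have pu: "p < fib (t + 2)" using fv_upper[of v] zv t_def p_def unfolding zr_def by simp
      have zp: "zeck p = v" using zeck_eq[OF zv] p_def by simp
      have nv: "n = fib (t + k + 5) + fib (t + k + 2) + p"
        using fv_pat[of k v] zn(2) w t_def p_def by simp
      have f2: "1 \<le> fib (t + k + 2)" using fib_pos by simp
      have pn: "p < n" using nv f2 by simp
      have fxp: "A105774 p = int p" using less.IH[OF pn] p1 zp v by simp
      have nu: "n < fib (t + k + 6)"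
        using fv_upper[of "zeck n"] zn w t_def unfolding zr_def by (simp add: eval_nat_numeral add.commute)
      have e6: "t + k + 5 + 1 = t + k + 6" by simp
      have jv: "j = t + k + 5"
        unfolding j_def
      proof (rule fib_index_eq)
        show "2 \<le> t + k + 5" by simp
        show "fib (t + k + 5) < n" using nv f2 by simp
        show "n \<le> fib (t + k + 5 + 1)" unfolding e6 using nu by simp
      qed
      have mv: "m = fib (t + k + 2) + p" using m_def nv jv by simp
      have "fib (t + 2) \<le> fib (t + k + 1)" using fib_mono k by simp
      moreover have "fib (t + k + 3) = fib (t + k + 2) + fib (t + k + 1)"
        by (simp add: eval_nat_numeral fibSS)
      ultimately have im: "fib_index m = t + k + 2"
        by (intro fib_index_eq) (use mv pu p1 in \<open>simp_all add: eval_nat_numeral\<close>)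
      have "2 \<le> m" using mv f2 p1 by simp
      then show "A105774 n = int n" using s2 im jv mv fxp by simp
    qed
  qed
qed

end
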